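(* Let $T\subset V$ be an open cone with basepoint $b\in T$, let $x\in\partial T\setminus[0]_T$, and let $f\in\mathcal B_T\cap A_T(x)$. Then $f$ satisfies $$f((1-\lambda)x+\lambda y)=\log\lambda+f(y)\qquad\text{whenever } \lambda>0,\ y\in T,\ (1-\lambda)x+\lambda y\in T,$$ so the extension $f|^{\tau(T,x)}:\tau(T,x)\to\mathbb R$, $f|^{\tau(T,x)}(y):=-\log\lambda_y+f((1-\lambda_y)x+\lambda_y y)$ (where $\lambda_y>0$ is any number with $(1-\lambda_y)x+\lambda_y y\in T$), is well defined; moreover $f|^{\tau(T,x)}\in\mathcal K_{\tau(T,x)}\cup\mathcal B_{\tau(T,x)}$.
   Context: $V$ is a finite-dimensional real vector space. An open cone is a nonempty open convex set $T\subset V$ with $\lambda T\subseteq T$ for all $\lambda>0$ and $0\notin T$; $\partial T$ its boundary. Write $x\le_T y$ iff $y-x\in\overline T$, $[0]_T:=\overline T\cap(-\overline T)$. $M_T(y/x):=\inf\{\lambda>0:y\le_T\lambda x\}$, $F_T(y,x):=\log M_T(y/x)$. Open tangent cone $\tau(T,x):=\{\lambda(y-x):\lambda>0,\ y\in T\}$ (an open cone containing $T$). For an open cone $S\ni b$: $f_{S,p}(y):=F_S(y,p)-F_S(b,p)$ ($p\in S$), $\mathcal K_S:=\{f_{S,p}:p\in S\}$; a sequence $(x_n)$ in $S$ converges in the Funk sense to $g$ if $F_S(\cdot,x_n)-F_S(b,x_n)\to g$ pointwise on $S$; a Funk horofunction of $S$ is such a limit not in $\mathcal K_S$; an almost-geodesic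 is a sequence $(x_l)$ in $S$ with, for some $\epsilon>0$, $\sum_{i=1}^l F_S(x_{i-1},x_i)\le F_S(x_0,x_l)+\epsilon$ for all $l\ge1$; $\mathcal B_S$ is the set of Funk horofunctions of $S$ that are Funk-sense limits of almost-geodesics. $A_T(x)$ is the set of Funk horofunctions of $T$ that are Funk-sense limits of sequences in $T$ converging to $x$ in the usual topology. *)

theory Defs
  imports "HOL-Analysis.Analysis"
begin

definition open_cone :: "'a::euclidean_space set \<Rightarrow> bool" where
  "open_cone T \<longleftrightarrow> T \<noteq> {} \<and> open T \<and> convex T \<and>
     (\<forall>l>0. \<forall>x\<in>T. l *\<^sub>R x \<in> T) \<and> 0 \<notin> T"

definition cone_le :: "'a::euclidean_space set \<Rightarrow> 'a \<Rightarrow> 'a \<Rightarrow> bool" where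
  "cone_le T x y \<longleftrightarrow> y - x \<in> closure T"

definition zero_class :: "'a::euclidean_space set \<Rightarrow> 'a set" where
  "zero_class T = closure T \<inter> uminus ` closure T"

definition funk_M :: "'a::euclidean_space set \<Rightarrow> 'a \<Rightarrow> 'a \<Rightarrow> real" where
  "funk_M T y x = Inf {l. l > 0 \<and> cone_le T y (l *\<^sub>R x)}"

definition funk :: "'a::euclidean_space set \<Rightarrow> 'a \<Rightarrow> 'a \<Rightarrow> real" where
  "funk T y x = ln (funk_M T y x)"

definition tangent_cone :: "'a::euclidean_space set \<Rightarrow> 'a \<Rightarrow> 'a set" where
  "tangent_cone T x = {l *\<^sub>R (y - x) | l y. l > 0 \<and> y \<in> T}"

definition funk_fn :: "'a::euclidean_space set \<Rightarrow> 'a \<Rightarrow> 'a \<Rightarrow> 'a \<Rightarrow> real" where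
  "funk_fn S b p y = funk S y p - funk S b p"

definition in_K :: "'a::euclidean_space set \<Rightarrow> 'a \<Rightarrow> ('a \<Rightarrow> real) \<Rightarrow> bool" where
  "in_K S b g \<longleftrightarrow> (\<exists>p\<in>S. \<forall>y\<in>S. g y = funk_fn S b p y)"

definition funk_converges :: "'a::euclidean_space set \<Rightarrow> 'a \<Rightarrow> (nat \<Rightarrow> 'a) \<Rightarrow> ('a \<Rightarrow> real) \<Rightarrow> bool" where
  "funk_converges S b xs g \<longleftrightarrow> (\<forall>n. xs n \<in> S) \<and>
     (\<forall>z\<in>S. (\<lambda>n. funk S z (xs n) - funk S b (xs n)) \<longlonglongrightarrow> g z)"

definition funk_horofunction :: "'a::euclidean_space set \<Rightarrow> 'a \<Rightarrow> ('a \<Rightarrow> real) \<Rightarrow> bool" where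
  "funk_horofunction S b g \<longleftrightarrow> (\<exists>xs. funk_converges S b xs g) \<and> \<not> in_K S b g"

definition almost_geodesic :: "'a::euclidean_space set \<Rightarrow> (nat \<Rightarrow> 'a) \<Rightarrow> bool" where
  "almost_geodesic S xs \<longleftrightarrow> (\<forall>n. xs n \<in> S) \<and>
     (\<exists>e>0. \<forall>l\<ge>1. (\<Sum>i=1..l. funk S (xs (i - 1)) (xs i)) \<le> funk S (xs 0) (xs l) + e)"

definition in_B :: "'a::euclidean_space set \<Rightarrow> 'a \<Rightarrow> ('a \<Rightarrow> real) \<Rightarrow> bool" where
  "in_B S b g \<longleftrightarrow> funk_horofunction S b g \<and>
     (\<exists>xs. almost_geodesic S xs \<and> funk_converges S b xs g)"

definition in_A :: "'a::euclidean_space set \<Rightarrow> 'a \<Rightarrow> 'a \<Rightarrow> ('a \<Rightarrow> real) \<Rightarrow> bool" where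
  "in_A T b x g \<longleftrightarrow> funk_horofunction T b g \<and>
     (\<exists>xs. funk_converges T b xs g \<and> xs \<longlonglongrightarrow> x)"

definition tangent_ext :: "'a::euclidean_space set \<Rightarrow> 'a \<Rightarrow> ('a \<Rightarrow> real) \<Rightarrow> 'a \<Rightarrow> real" where
  "tangent_ext T x f y =
     (let l = (SOME l. l > 0 \<and> (1 - l) *\<^sub>R x + l *\<^sub>R y \<in> T)
      in - ln l + f ((1 - l) *\<^sub>R x + l *\<^sub>R y))"

end

theory Submission
  imports Defs
begin


lemma oc_scale: "open_cone S \<Longrightarrow> l > 0 \<Longrightarrow> y \<in> S \<Longrightarrow> l *\<^sub>R y \<in> S"
  by (auto simp: open_cone_def)

lemma oc_add:
  assumes "open_cone S" "y \<in> S" "z \<in> S" shows "y + z \<in> S"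
proof -
  have c: "convex S" using assms(1) by (simp add: open_cone_def)
  have "2 *\<^sub>R y \<in> S" by (rule oc_scale[OF assms(1)]) (simp_all add: assms)
  moreover have "2 *\<^sub>R z \<in> S" by (rule oc_scale[OF assms(1)]) (simp_all add: assms)
  ultimately have "(1/2) *\<^sub>R (2 *\<^sub>R y) + (1/2) *\<^sub>R (2 *\<^sub>R z) \<in> S" using convexD[OF c, of "2 *\<^sub>R y" "2 *\<^sub>R z" "1/2" "1/2"] by simp
  then show ?thesis by simp
qed

lemma oc_add_closure:
  assumes "open_cone S" "y \<in> S" "z \<in> closure S" shows "y + z \<in> S"
proof -
  have "open S" using assms(1) by (simp add: open_cone_def)
  then obtain r where r: "r > 0" "ball y r \<subseteq> S" using assms(2) open_contains_ball by blast
  obtain z' where z': "z' \<in> S" "dist z z' < r" using closure_approachableD[OF assms(3) r(1)] by blast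
  have "y + z - z' \<in> ball y r" using z' by (simp add: dist_norm norm_minus_commute)
  then have "y + z - z' \<in> S" using r by blast
  from oc_add[OF assms(1) this z'(1)] show ?thesis by simp
qed

lemma oc_closure_scale:
  assumes "open_cone S" "z \<in> closure S" "l > 0" shows "l *\<^sub>R z \<in> closure S"
  unfolding closure_approachable
proof (intro allI impI)
  fix e :: real assume e: "e > 0"
  have ep: "e / l > 0" using e assms(3) by simp
  obtain z' where z': "z' \<in> S" "dist z z' < e / l" using closure_approachableD[OF assms(2) ep] by blast
  have "l *\<^sub>R z' \<in> S" using oc_scale[OF assms(1) assms(3) z'(1)] .
  moreover have "dist (l *\<^sub>R z') (l *\<^sub>R z) < e"
  proof -
    have "dist (l *\<^sub>R z') (l *\<^sub>R z) = l * dist z' z"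
      using assms(3) by (simp add: dist_norm flip: scaleR_diff_right)
    also have "\<dots> < e" using z' assms(3) by (simp add: dist_commute pos_less_divide_eq mult.commute)
    finally show ?thesis .
  qed
  ultimately show "\<exists>y\<in>S. dist y (l *\<^sub>R z) < e" by blast
qed

lemma oc_zero_closure:
  assumes "open_cone S" shows "0 \<in> closure S"
  unfolding closure_approachable
proof (intro allI impI)
  fix e :: real assume e: "e > 0"
  obtain t where t: "t \<in> S" using assms by (auto simp: open_cone_def)
  define l where "l = e / (2 * (norm t + 1))"
  have l: "l > 0" unfolding l_def using e norm_ge_zero[of t] by (intro divide_pos_pos mult_pos_pos) linarith+
  have "l *\<^sub>R t \<in> S" using oc_scale assms l t by blast
  moreover have "norm (l *\<^sub>R t) < e"
  proof -
    have "norm (l *\<^sub>R t) = l * norm t" using l by simp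
    also have "\<dots> < l * (norm t + 1)" using l by simp
    also have "\<dots> = e / 2"
    proof -
      have "norm t + 1 \<noteq> 0" by (smt (verit) norm_ge_zero)
      then show ?thesis unfolding l_def by (simp add: field_simps)
    qed
    finally show ?thesis using e by simp
  qed
  ultimately show "\<exists>y\<in>S. dist y 0 < e" by (metis diff_zero dist_norm)
qed

lemma oc_closure_scale0:
  assumes "open_cone S" "z \<in> closure S" "l \<ge> 0" shows "l *\<^sub>R z \<in> closure S"
  using oc_closure_scale[OF assms(1,2)] oc_zero_closure[OF assms(1)] assms(3)
  by (cases "l = 0") auto

lemma oc_closure_add:
  assumes "open_cone S" "y \<in> closure S" "z \<in> closure S" shows "y + z \<in> closure S"
  unfolding closure_approachable
proof (intro allI impI)
  fix e :: real assume e: "e > 0"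
  obtain y' where y': "y' \<in> S" "dist y y' < e/2" using closure_approachableD[OF assms(2)] e by (meson half_gt_zero)
  obtain z' where z': "z' \<in> S" "dist z z' < e/2" using closure_approachableD[OF assms(3)] e by (meson half_gt_zero)
  have "y' + z' \<in> S" using oc_add assms y' z' by blast
  moreover have "dist (y' + z') (y + z) < e"
  proof -
    have "dist (y' + z') (y + z) \<le> dist y' y + dist z' z" by (rule dist_triangle_add)
    then show ?thesis using y' z' by (simp add: dist_commute)
  qed
  ultimately show "\<exists>w\<in>S. dist w (y + z) < e" by blast
qed

lemma oc_neg_not_closure:
  assumes "open_cone S" "y \<in> S" shows "- y \<notin> closure S"
proof
  assume "- y \<in> closure S"
  from oc_add_closure[OF assms this] have "0 \<in> S" by simp
  then show False using assms(1) by (simp add: open_cone_def)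
qed


lemma funkM_props:
  assumes S: "open_cone S" and y: "y \<in> S" and p: "p \<in> S"
  shows "0 < funk_M S y p" "funk_M S y p *\<^sub>R p - y \<in> closure S"
    "funk_M S y p *\<^sub>R p - y \<notin> S"
    "\<And>l. l > 0 \<Longrightarrow> l *\<^sub>R p - y \<in> closure S \<Longrightarrow> funk_M S y p \<le> l"
proof -
  define L where "L = {l. l > 0 \<and> cone_le S y (l *\<^sub>R p)}"
  have M: "funk_M S y p = Inf L" by (simp add: funk_M_def L_def)
  have Lc: "l \<in> L \<longleftrightarrow> l > 0 \<and> l *\<^sub>R p - y \<in> closure S" for l by (simp add: L_def cone_le_def)
  have opS: "open S" using S by (simp add: open_cone_def)
  have p0: "p \<noteq> 0" using S p by (auto simp: open_cone_def)
  then have np: "norm p > 0" by simp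
  obtain r where r: "r > 0" "ball p r \<subseteq> S" using opS p open_contains_ball by blast
  define l0 where "l0 = 2 * norm y / r + 1"
  have l0: "l0 > 0" unfolding l0_def using r(1) norm_ge_zero[of y] by (smt (verit) divide_nonneg_pos)
  have "norm y < r * l0" unfolding l0_def using r(1) norm_ge_zero[of y] by (simp add: algebra_simps add_pos_nonneg)
  then have "norm y / l0 < r" using l0 by (simp add: pos_divide_less_eq mult.commute)
  then have "p - (1/l0) *\<^sub>R y \<in> ball p r" using l0 by (simp add: dist_norm)
  then have "p - (1/l0) *\<^sub>R y \<in> S" using r by blast
  from oc_scale[OF S l0 this] have "l0 *\<^sub>R p - y \<in> S" using l0 by (simp add: algebra_simps)
  then have l0L: "l0 \<in> L" using Lc l0 closure_subset by blast
  then have Lne: "L \<noteq> {}" by blast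
  have bdd: "bdd_below L" unfolding bdd_below_def using Lc by (meson less_le_not_le)
  have ny: "- y \<notin> closure S" using oc_neg_not_closure[OF S y] .
  have "open (- closure S)" by blast
  then obtain \<rho> where \<rho>: "\<rho> > 0" "ball (- y) \<rho> \<subseteq> - closure S" using ny open_contains_ball by blast
  have lowL: "\<rho> / norm p \<le> l" if "l \<in> L" for l
  proof -
    have l: "l > 0" "l *\<^sub>R p - y \<in> closure S" using that Lc by auto
    then have "l *\<^sub>R p - y \<notin> ball (- y) \<rho>" using \<rho> by blast
    then have "\<rho> \<le> l * norm p" using l by (simp add: dist_norm)
    then show ?thesis using np by (simp add: pos_divide_le_eq)
  qed
  have Mpos: "\<rho> / norm p \<le> Inf L" by (rule cInf_greatest[OF Lne lowL])
  show pos: "0 < funk_M S y p" using Mpos \<rho> np M by (smt (verit) divide_pos_pos)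
  show low: "funk_M S y p \<le> l" if "l > 0" "l *\<^sub>R p - y \<in> closure S" for l
    using cInf_lower[OF _ bdd, of l] that Lc M by auto
  show cl: "funk_M S y p *\<^sub>R p - y \<in> closure S"
  proof -
    have "funk_M S y p *\<^sub>R p - y \<in> closure (closure S)"
      unfolding closure_approachable
    proof (intro allI impI)
      fix e :: real assume e: "e > 0"
      have "Inf L < funk_M S y p + e / norm p" using M e np by simp
      then obtain l where l: "l \<in> L" "l < funk_M S y p + e / norm p"
        using cInf_less_iff[OF Lne bdd] by blast
      have lM: "funk_M S y p \<le> l" using low l Lc by auto
      have "dist (l *\<^sub>R p - y) (funk_M S y p *\<^sub>R p - y) = (l - funk_M S y p) * norm p"
        using lM by (simp add: dist_norm flip: scaleR_diff_left)
      also have "\<dots> < e"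
      proof -
        have "l - funk_M S y p < e / norm p" using l(2) by linarith
        then show ?thesis using np by (simp add: pos_less_divide_eq)
      qed
      finally show "\<exists>z\<in>closure S. dist z (funk_M S y p *\<^sub>R p - y) < e" using l Lc by blast
    qed
    then show ?thesis by simp
  qed
  show "funk_M S y p *\<^sub>R p - y \<notin> S"
  proof
    assume "funk_M S y p *\<^sub>R p - y \<in> S"
    then obtain r' where r': "r' > 0" "ball (funk_M S y p *\<^sub>R p - y) r' \<subseteq> S"
      using opS open_contains_ball by blast
    define d where "d = min (funk_M S y p / 2) (r' / (2 * norm p))"
    have d: "d > 0" unfolding d_def using pos r' np by simp
    have dM: "funk_M S y p - d > 0" unfolding d_def using pos by linarith
    have "d \<le> r' / (2 * norm p)" by (simp add: d_def)
    then have "d * norm p \<le> r' / (2 * norm p) * norm p" using mult_right_mono[OF _ norm_ge_zero] by blast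
    also have "\<dots> = r' / 2" using np by simp
    finally have dn: "d * norm p < r'" using r' by linarith
    have eq: "(funk_M S y p *\<^sub>R p - y) - ((funk_M S y p - d) *\<^sub>R p - y) = d *\<^sub>R p"
      by (simp add: algebra_simps)
    have "dist (funk_M S y p *\<^sub>R p - y) ((funk_M S y p - d) *\<^sub>R p - y) = d * norm p"
      unfolding dist_norm eq using d by simp
    then have "(funk_M S y p - d) *\<^sub>R p - y \<in> ball (funk_M S y p *\<^sub>R p - y) r'"
      using dn by simp
    then have "(funk_M S y p - d) *\<^sub>R p - y \<in> S" using r' by blast
    then have "funk_M S y p \<le> funk_M S y p - d" using low dM closure_subset by blast
    then show False using d by simp
  qed
qed


lemma M_le:
  assumes "open_cone S" "y \<in> S" "p \<in> S" "l > 0" "l *\<^sub>R p - y \<in> closure S"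
  shows "funk_M S y p \<le> l"
  using funkM_props(4)[OF assms(1-3)] assms(4,5) by blast

lemma M_mono:
  assumes S: "open_cone S" and "y \<in> S" "y' \<in> S" "p \<in> S" "y' - y \<in> closure S"
  shows "funk_M S y p \<le> funk_M S y' p"
proof -
  have "funk_M S y' p *\<^sub>R p - y = (funk_M S y' p *\<^sub>R p - y') + (y' - y)" by simp
  also have "\<dots> \<in> closure S" using oc_closure_add[OF S funkM_props(2)[OF S assms(3,4)] assms(5)] .
  finally show ?thesis using M_le[OF S assms(2,4) funkM_props(1)[OF S assms(3,4)]] by blast
qed

lemma M_scale:
  assumes S: "open_cone S" and y: "y \<in> S" and p: "p \<in> S" and c: "c > 0"
  shows "funk_M S (c *\<^sub>R y) p = c * funk_M S y p"
proof -
  have cy: "c *\<^sub>R y \<in> S" using oc_scale[OF S c y] .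
  have M0: "funk_M S y p > 0" "funk_M S (c *\<^sub>R y) p > 0"
    using funkM_props(1)[OF S y p] funkM_props(1)[OF S cy p] by auto
  have "(c * funk_M S y p) *\<^sub>R p - c *\<^sub>R y = c *\<^sub>R (funk_M S y p *\<^sub>R p - y)" by (simp add: algebra_simps)
  also have "\<dots> \<in> closure S" using oc_closure_scale[OF S funkM_props(2)[OF S y p] c] .
  finally have le1: "funk_M S (c *\<^sub>R y) p \<le> c * funk_M S y p"
    using M_le[OF S cy p] M0 c by simp
  have "(funk_M S (c *\<^sub>R y) p / c) *\<^sub>R p - y = (1/c) *\<^sub>R (funk_M S (c *\<^sub>R y) p *\<^sub>R p - c *\<^sub>R y)"
    using c by (simp add: algebra_simps)
  also have "\<dots> \<in> closure S" using oc_closure_scale[OF S funkM_props(2)[OF S cy p]] c by simp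
  finally have "funk_M S y p \<le> funk_M S (c *\<^sub>R y) p / c"
    using M_le[OF S y p] M0 c by simp
  then have "c * funk_M S y p \<le> funk_M S (c *\<^sub>R y) p" using c by (simp add: pos_le_divide_eq mult.commute)
  then show ?thesis using le1 by linarith
qed

lemma M_tri:
  assumes S: "open_cone S" and y: "y \<in> S" and s: "s \<in> S" and p: "p \<in> S"
  shows "funk_M S y p \<le> funk_M S y s * funk_M S s p"
proof -
  let ?a = "funk_M S y s" and ?b = "funk_M S s p"
  have pos: "?a > 0" "?b > 0" using funkM_props(1)[OF S y s] funkM_props(1)[OF S s p] by auto
  have "(?a * ?b) *\<^sub>R p - y = ?a *\<^sub>R (?b *\<^sub>R p - s) + (?a *\<^sub>R s - y)" by (simp add: algebra_simps)
  also have "\<dots> \<in> closure S"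
    using oc_closure_add[OF S oc_closure_scale[OF S funkM_props(2)[OF S s p] pos(1)] funkM_props(2)[OF S y s]] .
  finally show ?thesis using M_le[OF S y p] pos by simp
qed

lemma M_self:
  assumes S: "open_cone S" and p: "p \<in> S"
  shows "funk_M S p p = 1"
proof -
  have "funk_M S p p \<le> 1" using M_le[OF S p p, of 1] oc_zero_closure[OF S] by simp
  moreover have "\<not> funk_M S p p < 1"
  proof
    assume a: "funk_M S p p < 1"
    have "(1 - funk_M S p p) *\<^sub>R p \<in> S" using oc_scale[OF S _ p] a by simp
    from oc_neg_not_closure[OF S this] have "- ((1 - funk_M S p p) *\<^sub>R p) \<notin> closure S" .
    moreover have "- ((1 - funk_M S p p) *\<^sub>R p) = funk_M S p p *\<^sub>R p - p" by (simp add: algebra_simps)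
    ultimately show False using funkM_props(2)[OF S p p] by simp
  qed
  ultimately show ?thesis by simp
qed

lemma M_sub:
  assumes S: "open_cone S" and S': "open_cone S'" and sub: "S \<subseteq> S'"
    and y: "y \<in> S" and p: "p \<in> S"
  shows "funk_M S' y p \<le> funk_M S y p"
proof -
  have "closure S \<subseteq> closure S'" using sub closure_mono by blast
  then show ?thesis using M_le[OF S' _ _ funkM_props(1)[OF S y p]] funkM_props(2)[OF S y p] sub y p by blast
qed

lemma dual_closure:
  assumes "\<forall>t\<in>S. 0 \<le> a \<bullet> t" "z \<in> closure S" shows "0 \<le> a \<bullet> z"
proof -
  have "closure S \<subseteq> {x. inner a x \<ge> 0}" using assms(1) by (intro closure_minimal closed_halfspace_ge) auto
  then show ?thesis using assms(2) by auto
qed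

lemma M_dual:
  assumes S: "open_cone S" and y: "y \<in> S" and p: "p \<in> S"
    and a: "\<forall>t\<in>S. 0 \<le> a \<bullet> t" and ap: "a \<bullet> p > 0"
  shows "a \<bullet> y / (a \<bullet> p) \<le> funk_M S y p"
proof -
  have "0 \<le> a \<bullet> (funk_M S y p *\<^sub>R p - y)" using dual_closure[OF a funkM_props(2)[OF S y p]] .
  then have "a \<bullet> y \<le> funk_M S y p * (a \<bullet> p)" by (simp add: inner_diff_right)
  then show ?thesis using ap by (simp add: pos_divide_le_eq)
qed

lemma F_pos_M: "open_cone S \<Longrightarrow> y \<in> S \<Longrightarrow> p \<in> S \<Longrightarrow> funk S y p = ln (funk_M S y p) \<and> funk_M S y p > 0"
  using funkM_props(1) by (simp add: funk_def)

lemma F_scale: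
  assumes S: "open_cone S" and y: "y \<in> S" and p: "p \<in> S" and c: "c > 0"
  shows "funk S (c *\<^sub>R y) p = ln c + funk S y p"
  using M_scale[OF assms] funkM_props(1)[OF S y p] c by (simp add: funk_def ln_mult)

lemma F_tri:
  assumes S: "open_cone S" and y: "y \<in> S" and s: "s \<in> S" and p: "p \<in> S"
  shows "funk S y p \<le> funk S y s + funk S s p"
proof -
  have pos: "funk_M S y s > 0" "funk_M S s p > 0" "funk_M S y p > 0"
    using funkM_props(1)[OF S y s] funkM_props(1)[OF S s p] funkM_props(1)[OF S y p] by auto
  have "ln (funk_M S y p) \<le> ln (funk_M S y s * funk_M S s p)"
    using M_tri[OF assms] pos by simp
  then show ?thesis using pos by (simp add: funk_def ln_mult)
qed

lemma F_self: "open_cone S \<Longrightarrow> p \<in> S \<Longrightarrow> funk S p p = 0"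
  using M_self[of S p] by (simp add: funk_def)

lemma F_mono:
  assumes S: "open_cone S" and "y \<in> S" "y' \<in> S" "p \<in> S" "y' - y \<in> closure S"
  shows "funk S y p \<le> funk S y' p"
  using M_mono[OF assms] funkM_props(1)[OF S assms(2,4)] by (simp add: funk_def)

lemma F_sub:
  assumes S: "open_cone S" and S': "open_cone S'" and sub: "S \<subseteq> S'"
    and y: "y \<in> S" and p: "p \<in> S"
  shows "funk S' y p \<le> funk S y p"
proof -
  have "0 < funk_M S' y p" using funkM_props(1)[OF S', of y p] sub y p by blast
  then show ?thesis using M_sub[OF assms] by (simp add: funk_def)
qed


lemma FL_b:
  assumes "funk_converges S b q f" "b \<in> S" shows "f b = 0"
proof -
  have "(\<lambda>n. funk S b (q n) - funk S b (q n)) \<longlonglongrightarrow> f b" using assms unfolding funk_converges_def by blast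
  then have "(\<lambda>n. 0::real) \<longlonglongrightarrow> f b" by simp
  then show ?thesis using LIMSEQ_unique tendsto_const by blast
qed

lemma FL_diff:
  assumes "funk_converges S b q f" "y \<in> S" "s \<in> S"
  shows "(\<lambda>n. funk S y (q n) - funk S s (q n)) \<longlonglongrightarrow> f y - f s"
proof -
  have "(\<lambda>n. (funk S y (q n) - funk S b (q n)) - (funk S s (q n) - funk S b (q n))) \<longlonglongrightarrow> f y - f s"
    using assms by (intro tendsto_diff) (auto simp: funk_converges_def)
  then show ?thesis by simp
qed

lemma FL_tri:
  assumes S: "open_cone S" and c: "funk_converges S b q f" and y: "y \<in> S" and s: "s \<in> S"
  shows "f y \<le> funk S y s + f s"
proof -
  have q: "\<And>n. q n \<in> S" using c by (simp add: funk_converges_def)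
  have "f y - f s \<le> funk S y s"
    using FL_diff[OF c y s] by (rule tendsto_upperbound) (auto intro!: always_eventually simp: F_tri[OF S y s q] algebra_simps)
  then show ?thesis by simp
qed

lemma FL_scale:
  assumes S: "open_cone S" and c: "funk_converges S b q f" and y: "y \<in> S" and k: "k > 0"
  shows "f (k *\<^sub>R y) = ln k + f y"
proof -
  have q: "\<And>n. q n \<in> S" using c by (simp add: funk_converges_def)
  have ky: "k *\<^sub>R y \<in> S" using oc_scale[OF S k y] .
  have "(\<lambda>n. funk S (k *\<^sub>R y) (q n) - funk S y (q n)) \<longlonglongrightarrow> f (k *\<^sub>R y) - f y"
    using FL_diff[OF c ky y] .
  moreover have "(\<lambda>n. funk S (k *\<^sub>R y) (q n) - funk S y (q n)) = (\<lambda>n. ln k)"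
    using F_scale[OF S y q k] by simp
  ultimately have "(\<lambda>n. ln k) \<longlonglongrightarrow> f (k *\<^sub>R y) - f y" by simp
  then have "ln k = f (k *\<^sub>R y) - f y" using LIMSEQ_unique tendsto_const by blast
  then show ?thesis by simp
qed

lemma SUPP:
  assumes S: "open_cone S" and z: "z \<in> closure S" "z \<notin> S"
  shows "\<exists>a. norm a = 1 \<and> (\<forall>t\<in>S. 0 \<le> a \<bullet> t) \<and> a \<bullet> z = 0"
proof -
  have cv: "convex S" and op: "open S" using S by (auto simp: open_cone_def)
  have "z \<notin> rel_interior S" using z rel_interior_open[OF op] by simp
  then obtain a where a: "a \<noteq> 0" "\<And>y. y \<in> closure S \<Longrightarrow> a \<bullet> z \<le> a \<bullet> y"
    using supporting_hyperplane_relative_frontier[OF cv z(1)] by metis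
  have az: "a \<bullet> z \<le> 0" using a(2)[OF oc_zero_closure[OF S]] by simp
  have pos: "0 \<le> a \<bullet> t" if t: "t \<in> S" for t
  proof (rule ccontr)
    assume "\<not> 0 \<le> a \<bullet> t"
    then have neg: "a \<bullet> t < 0" by simp
    define k where "k = (\<bar>a \<bullet> z\<bar> + 1) / (- (a \<bullet> t))"
    have k: "k > 0" unfolding k_def using neg by (intro divide_pos_pos) (simp_all add: add_nonneg_pos)
    have "k *\<^sub>R t \<in> closure S" using oc_scale[OF S k t] closure_subset by blast
    from a(2)[OF this] have "a \<bullet> z \<le> k * (a \<bullet> t)" by simp
    moreover have "k * (a \<bullet> t) = - (\<bar>a \<bullet> z\<bar> + 1)" unfolding k_def using neg by simp
    ultimately show False by linarith
  qed
  have "0 \<le> a \<bullet> z" using dual_closure[of S a z] pos z(1) by blast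
  then have az0: "a \<bullet> z = 0" using az by simp
  define a' where "a' = (1 / norm a) *\<^sub>R a"
  have "norm a' = 1" using a(1) by (simp add: a'_def)
  moreover have "\<forall>t\<in>S. 0 \<le> a' \<bullet> t" using pos a(1) by (simp add: a'_def)
  moreover have "a' \<bullet> z = 0" using az0 by (simp add: a'_def)
  ultimately show ?thesis by blast
qed

lemma POS:
  assumes S: "open_cone S" and t: "t \<in> S"
  shows "\<exists>r>0. \<forall>a. norm a = 1 \<longrightarrow> (\<forall>t'\<in>S. 0 \<le> a \<bullet> t') \<longrightarrow> r \<le> a \<bullet> t"
proof -
  have op: "open S" using S by (simp add: open_cone_def)
  obtain r where r: "r > 0" "ball t r \<subseteq> S" using op t open_contains_ball by blast
  have "r/2 \<le> a \<bullet> t" if a: "norm a = 1" "\<forall>t'\<in>S. 0 \<le> a \<bullet> t'" for a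
  proof -
    have "t - (r/2) *\<^sub>R a \<in> ball t r" using r a by (simp add: dist_norm)
    then have "0 \<le> a \<bullet> (t - (r/2) *\<^sub>R a)" using a r by blast
    moreover have "a \<bullet> a = 1" using a by (simp add: dot_square_norm)
    ultimately show ?thesis by (simp add: inner_diff_right)
  qed
  then show ?thesis using r by (intro exI[of _ "r/2"]) auto
qed


lemma lemA:
  assumes T: "open_cone T" and x: "x \<in> closure T" "x \<notin> T"
    and cv: "funk_converges T b p f" and px: "p \<longlonglongrightarrow> x"
    and u: "u \<in> T" and v: "v \<in> T" and c0: "0 < c" "c \<le> 1" and uv: "u = c *\<^sub>R v + (1 - c) *\<^sub>R x"
  shows "f u = ln c + f v"
proof -
  have pT: "\<And>n. p n \<in> T" using cv by (simp add: funk_converges_def)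
  obtain a0 where a0: "norm a0 = 1" "\<forall>t\<in>T. 0 \<le> a0 \<bullet> t" "a0 \<bullet> x = 0" using SUPP[OF T x] by blast
  obtain ru where ru: "ru > 0" "\<And>a. norm a = 1 \<Longrightarrow> (\<forall>t\<in>T. 0 \<le> a \<bullet> t) \<Longrightarrow> ru \<le> a \<bullet> u"
    using POS[OF T u] by blast
  obtain rv where rv: "rv > 0" "\<And>a. norm a = 1 \<Longrightarrow> (\<forall>t\<in>T. 0 \<le> a \<bullet> t) \<Longrightarrow> rv \<le> a \<bullet> v"
    using POS[OF T v] by blast
  have posp: "0 < a \<bullet> p n" if "norm a = 1" "\<forall>t\<in>T. 0 \<le> a \<bullet> t" for a n
  proof -
    obtain r where "r > 0" "\<And>a. norm a = 1 \<Longrightarrow> (\<forall>t\<in>T. 0 \<le> a \<bullet> t) \<Longrightarrow> r \<le> a \<bullet> p n"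
      using POS[OF T pT[of n]] by blast
    then show ?thesis using that by fastforce
  qed
  define M where "M n = funk_M T u (p n)" for n
  have Mpos: "\<And>n. M n > 0" unfolding M_def using funkM_props(1)[OF T u pT] .
  have "\<forall>n. \<exists>a. norm a = 1 \<and> (\<forall>t\<in>T. 0 \<le> a \<bullet> t) \<and> a \<bullet> (M n *\<^sub>R p n - u) = 0"
    unfolding M_def using SUPP[OF T funkM_props(2)[OF T u pT] funkM_props(3)[OF T u pT]] by blast
  then obtain a where a: "\<And>n. norm (a n) = 1" "\<And>n. \<forall>t\<in>T. 0 \<le> a n \<bullet> t"
    "\<And>n. a n \<bullet> (M n *\<^sub>R p n - u) = 0" by metis
  have anp: "\<And>n. a n \<bullet> p n > 0" using posp a by blast
  have a0p: "\<And>n. a0 \<bullet> p n > 0" using posp a0 by blast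
  have a0u: "a0 \<bullet> u \<ge> ru" using ru a0 by blast
  have eq: "a n \<bullet> u = M n * (a n \<bullet> p n)" for n using a(3)[of n] by (simp add: inner_diff_right)
  have bound: "a n \<bullet> p n \<le> norm u * (a0 \<bullet> p n) / (a0 \<bullet> u)" for n
  proof -
    have Mge: "a0 \<bullet> u / (a0 \<bullet> p n) \<le> M n" unfolding M_def using M_dual[OF T u pT a0(2) a0p] .
    have "a n \<bullet> u \<le> norm u" using norm_cauchy_schwarz[of "a n" u] a(1) by simp
    then have "M n * (a n \<bullet> p n) \<le> norm u" using eq by simp
    moreover have "(a0 \<bullet> u / (a0 \<bullet> p n)) * (a n \<bullet> p n) \<le> M n * (a n \<bullet> p n)"
      using mult_right_mono[OF Mge less_imp_le[OF anp[of n]]] .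
    ultimately have "(a0 \<bullet> u / (a0 \<bullet> p n)) * (a n \<bullet> p n) \<le> norm u" by linarith
    then have "(a0 \<bullet> u) * (a n \<bullet> p n) \<le> norm u * (a0 \<bullet> p n)" using a0p[of n]
      by (simp add: divide_le_eq mult.commute)
    then show ?thesis using a0u ru by (simp add: pos_le_divide_eq mult.commute)
  qed
  have a0plim: "(\<lambda>n. a0 \<bullet> p n) \<longlonglongrightarrow> 0"
    using tendsto_inner[OF tendsto_const px, of a0] a0(3) by simp
  have blim: "(\<lambda>n. norm u * (a0 \<bullet> p n) / (a0 \<bullet> u)) \<longlonglongrightarrow> 0"
    using tendsto_divide[OF tendsto_mult[OF tendsto_const a0plim, of "norm u"] tendsto_const, of "a0 \<bullet> u"] a0u ru by simp
  have dlim: "(\<lambda>n. norm (x - p n)) \<longlonglongrightarrow> 0"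
  proof -
    have "(\<lambda>n. p n - x) \<longlonglongrightarrow> 0" using tendsto_diff[OF px tendsto_const, of x] by simp
    then have "(\<lambda>n. norm (p n - x)) \<longlonglongrightarrow> 0" by (rule tendsto_norm_zero)
    then show ?thesis by (simp add: norm_minus_commute)
  qed
  define \<alpha> where "\<alpha> n = a n \<bullet> x" for n
  have \<alpha>0: "\<And>n. 0 \<le> \<alpha> n" unfolding \<alpha>_def using dual_closure[OF a(2) x(1)] .
  have \<alpha>up: "\<alpha> n \<le> norm u * (a0 \<bullet> p n) / (a0 \<bullet> u) + norm (x - p n)" for n
  proof -
    have "\<alpha> n = a n \<bullet> p n + a n \<bullet> (x - p n)" unfolding \<alpha>_def by (simp add: inner_diff_right)
    also have "a n \<bullet> (x - p n) \<le> norm (x - p n)" using norm_cauchy_schwarz[of "a n" "x - p n"] a(1) by simp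
    finally show ?thesis using bound[of n] by linarith
  qed
  have \<alpha>lim: "\<alpha> \<longlonglongrightarrow> 0"
    using tendsto_sandwich[OF always_eventually always_eventually tendsto_const tendsto_add[OF blim dlim]] \<alpha>0 \<alpha>up
    by simp
  define D where "D n = funk T u (p n) - funk T v (p n)" for n
  have Dlim: "D \<longlonglongrightarrow> f u - f v" unfolding D_def using FL_diff[OF cv u v] .
  have Dlow: "ln c \<le> D n" for n
  proof -
    have cvT: "c *\<^sub>R v \<in> T" using oc_scale[OF T c0(1) v] .
    have "u - c *\<^sub>R v = (1 - c) *\<^sub>R x" using uv by simp
    also have "\<dots> \<in> closure T" using oc_closure_scale0[OF T x(1)] c0 by simp
    finally have "funk T (c *\<^sub>R v) (p n) \<le> funk T u (p n)" using F_mono[OF T cvT u pT] by blast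
    then show ?thesis unfolding D_def using F_scale[OF T v pT c0(1)] by simp
  qed
  have Dup: "D n \<le> ln (c + (1 - c) * \<alpha> n / rv)" for n
  proof -
    define w where "w = a n \<bullet> v"
    have w: "rv \<le> w" unfolding w_def using rv a by blast
    have Mv: "w / (a n \<bullet> p n) \<le> funk_M T v (p n)" unfolding w_def using M_dual[OF T v pT a(2) anp] .
    have au: "a n \<bullet> u = c * w + (1 - c) * \<alpha> n" unfolding w_def \<alpha>_def using uv by (simp add: inner_add_right)
    have Mu: "M n = (c * w + (1 - c) * \<alpha> n) / (a n \<bullet> p n)" using eq[of n] au anp[of n] by (simp add: field_simps)
    have k0: "0 \<le> (1 - c) * \<alpha> n" using c0 \<alpha>0[of n] by simp
    have "(1 - c) * \<alpha> n \<le> w * ((1 - c) * \<alpha> n / rv)"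
    proof -
      have "(1 - c) * \<alpha> n = rv * ((1 - c) * \<alpha> n / rv)" using rv by simp
      also have "\<dots> \<le> w * ((1 - c) * \<alpha> n / rv)" using w k0 rv by (intro mult_right_mono) simp_all
      finally show ?thesis .
    qed
    then have num: "c * w + (1 - c) * \<alpha> n \<le> w * (c + (1 - c) * \<alpha> n / rv)" by (simp add: algebra_simps)
    have kpos: "c + (1 - c) * \<alpha> n / rv > 0" using c0 k0 rv by (simp add: add_pos_nonneg)
    have "M n \<le> (w / (a n \<bullet> p n)) * (c + (1 - c) * \<alpha> n / rv)"
      unfolding Mu using num anp[of n] by (simp add: divide_right_mono)
    also have "\<dots> \<le> funk_M T v (p n) * (c + (1 - c) * \<alpha> n / rv)"
      using mult_right_mono[OF Mv less_imp_le[OF kpos]] .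
    finally have le: "M n \<le> funk_M T v (p n) * (c + (1 - c) * \<alpha> n / rv)" .
    have Mvp: "funk_M T v (p n) > 0" using funkM_props(1)[OF T v pT] .
    have "ln (M n) \<le> ln (funk_M T v (p n) * (c + (1 - c) * \<alpha> n / rv))"
      using le Mpos[of n] by simp
    then have "ln (M n) \<le> ln (funk_M T v (p n)) + ln (c + (1 - c) * \<alpha> n / rv)"
      using Mvp kpos by (simp add: ln_mult)
    then show ?thesis unfolding D_def M_def funk_def by simp
  qed
  have uplim: "(\<lambda>n. ln (c + (1 - c) * \<alpha> n / rv)) \<longlonglongrightarrow> ln c"
  proof -
    have "(\<lambda>n. c + (1 - c) * \<alpha> n / rv) \<longlonglongrightarrow> c + (1 - c) * 0 / rv"
      using rv(1) by (intro tendsto_intros \<alpha>lim) simp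
    then show ?thesis using c0 by (intro tendsto_ln) simp_all
  qed
  have "D \<longlonglongrightarrow> ln c"
    by (rule tendsto_sandwich[OF always_eventually always_eventually tendsto_const uplim]) (use Dlow Dup in auto)
  then have "f u - f v = ln c" using Dlim LIMSEQ_unique by blast
  then show ?thesis by simp
qed



lemma tc_char:
  assumes T: "open_cone T"
  shows "tangent_cone T x = {v. \<exists>c>0. v + c *\<^sub>R x \<in> T}"
proof (intro equalityI subsetI)
  fix v assume "v \<in> tangent_cone T x"
  then obtain l y where ly: "v = l *\<^sub>R (y - x)" "l > 0" "y \<in> T" by (auto simp: tangent_cone_def)
  have "v + l *\<^sub>R x = l *\<^sub>R y" using ly by (simp add: algebra_simps)
  then have "v + l *\<^sub>R x \<in> T" using oc_scale[OF T ly(2) ly(3)] by simp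
  then show "v \<in> {v. \<exists>c>0. v + c *\<^sub>R x \<in> T}" using ly(2) by (intro CollectI exI[of _ l]) simp
next
  fix v assume "v \<in> {v. \<exists>c>0. v + c *\<^sub>R x \<in> T}"
  then obtain c where c: "c > 0" "v + c *\<^sub>R x \<in> T" by auto
  have "v = c *\<^sub>R ((1/c) *\<^sub>R (v + c *\<^sub>R x) - x)" using c by (simp add: algebra_simps)
  moreover have "(1/c) *\<^sub>R (v + c *\<^sub>R x) \<in> T" using oc_scale[OF T _ c(2)] c by simp
  ultimately show "v \<in> tangent_cone T x" using c unfolding tangent_cone_def
    by (intro CollectI exI[of _ c] exI[of _ "(1/c) *\<^sub>R (v + c *\<^sub>R x)"]) simp
qed

lemma tc_sub:
  assumes T: "open_cone T" and x: "x \<in> closure T"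
  shows "T \<subseteq> tangent_cone T x"
proof
  fix t assume t: "t \<in> T"
  have "t + 1 *\<^sub>R x \<in> T" using oc_add_closure[OF T t x] by simp
  then show "t \<in> tangent_cone T x" unfolding tc_char[OF T] by (intro CollectI exI[of _ 1]) simp
qed

lemma tc_open_cone:
  assumes T: "open_cone T" and x: "x \<in> closure T" "x \<notin> T"
  shows "open_cone (tangent_cone T x)"
proof -
  let ?C = "tangent_cone T x"
  have ne: "?C \<noteq> {}" using tc_sub[OF T x(1)] T by (auto simp: open_cone_def)
  have op: "open ?C"
  proof -
    have eq: "?C = (\<Union>c\<in>{0<..}. (\<lambda>v. v + c *\<^sub>R x) -` T)" unfolding tc_char[OF T] by auto
    have "open ((\<lambda>v. v + c *\<^sub>R x) -` T)" for c :: real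
      using T by (intro continuous_open_vimage) (auto simp: open_cone_def intro!: continuous_intros)
    then show ?thesis unfolding eq by blast
  qed
  have cv: "convex ?C"
  proof (rule convexI)
    fix v w :: 'a and u1 u2 :: real
    assume v: "v \<in> ?C" and w: "w \<in> ?C" and u0: "0 \<le> u1" "0 \<le> u2" "u1 + u2 = 1"
    then have u: "0 \<le> u1 \<and> 0 \<le> u2 \<and> u1 + u2 = 1" by simp
    obtain c1 where c1: "c1 > 0" "v + c1 *\<^sub>R x \<in> T" using v unfolding tc_char[OF T] by auto
    obtain c2 where c2: "c2 > 0" "w + c2 *\<^sub>R x \<in> T" using w unfolding tc_char[OF T] by auto
    have cvT: "convex T" using T by (simp add: open_cone_def)
    have "u1 *\<^sub>R (v + c1 *\<^sub>R x) + u2 *\<^sub>R (w + c2 *\<^sub>R x) \<in> T"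
      using convexD[OF cvT c1(2) c2(2)] u by blast
    moreover have "u1 *\<^sub>R (v + c1 *\<^sub>R x) + u2 *\<^sub>R (w + c2 *\<^sub>R x) = (u1 *\<^sub>R v + u2 *\<^sub>R w) + (u1 * c1 + u2 * c2) *\<^sub>R x"
      by (simp add: algebra_simps)
    moreover have "u1 * c1 + u2 * c2 > 0"
    proof (cases "u1 = 0")
      case True then show ?thesis using u c2 by simp
    next
      case False then have "u1 > 0" using u by simp
      then show ?thesis using u c1 c2 by (simp add: add_pos_nonneg)
    qed
    ultimately show "u1 *\<^sub>R v + u2 *\<^sub>R w \<in> ?C" unfolding tc_char[OF T] by auto
  qed
  have sc: "\<forall>l>0. \<forall>v\<in>?C. l *\<^sub>R v \<in> ?C"
  proof (intro allI impI ballI)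
    fix l :: real and v assume l: "l > 0" and v: "v \<in> ?C"
    obtain c where c: "c > 0" "v + c *\<^sub>R x \<in> T" using v unfolding tc_char[OF T] by auto
    have "l *\<^sub>R v + (l * c) *\<^sub>R x = l *\<^sub>R (v + c *\<^sub>R x)" by (simp add: algebra_simps)
    then have "l *\<^sub>R v + (l * c) *\<^sub>R x \<in> T" using oc_scale[OF T l c(2)] by simp
    then show "l *\<^sub>R v \<in> ?C" unfolding tc_char[OF T] using l c by (intro CollectI exI[of _ "l * c"]) simp
  qed
  have z: "0 \<notin> ?C"
  proof
    assume "0 \<in> ?C"
    then obtain c where c: "c > 0" "c *\<^sub>R x \<in> T" unfolding tc_char[OF T] by auto
    have "(1/c) *\<^sub>R (c *\<^sub>R x) \<in> T" using oc_scale[OF T _ c(2), of "1/c"] c(1) by simp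
    then show False using x(2) c by simp
  qed
  show ?thesis using ne op cv sc z by (simp add: open_cone_def)
qed

lemma tc_shift:
  assumes T: "open_cone T" and x: "x \<in> closure T" and v: "v \<in> tangent_cone T x"
  shows "v + r *\<^sub>R x \<in> tangent_cone T x"
proof -
  obtain c where c: "c > 0" "v + c *\<^sub>R x \<in> T" using v unfolding tc_char[OF T] by auto
  show ?thesis
  proof (cases "c - r > 0")
    case True
    have eq: "v + r *\<^sub>R x + (c - r) *\<^sub>R x = v + c *\<^sub>R x" by (simp add: algebra_simps)
    have "v + r *\<^sub>R x + (c - r) *\<^sub>R x \<in> T" using c(2) by (simp only: eq)
    then show ?thesis unfolding tc_char[OF T] using True by (intro CollectI exI[of _ "c - r"]) simp
  next
    case False
    have "(r - c + 1) *\<^sub>R x \<in> closure T" using oc_closure_scale0[OF T x] False by simp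
    from oc_add_closure[OF T c(2) this] have "v + c *\<^sub>R x + (r - c + 1) *\<^sub>R x \<in> T" .
    moreover have "v + c *\<^sub>R x + (r - c + 1) *\<^sub>R x = v + r *\<^sub>R x + 1 *\<^sub>R x" by (simp add: algebra_simps)
    ultimately show ?thesis unfolding tc_char[OF T] by (intro CollectI exI[of _ 1]) simp
  qed
qed

lemma tc_line:
  assumes T: "open_cone T" and x: "x \<in> closure T" "x \<notin> T"
  shows "r *\<^sub>R x \<in> closure (tangent_cone T x)"
  unfolding closure_approachable
proof (intro allI impI)
  fix e :: real assume e: "e > 0"
  have "0 \<in> closure (tangent_cone T x)" using oc_zero_closure[OF tc_open_cone[OF T x]] .
  then obtain t where t: "t \<in> tangent_cone T x" "dist 0 t < e" using closure_approachableD e by blast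
  have "t + r *\<^sub>R x \<in> tangent_cone T x" using tc_shift[OF T x(1) t(1)] .
  moreover have "dist (t + r *\<^sub>R x) (r *\<^sub>R x) < e" using t(2) by (simp add: dist_norm)
  ultimately show "\<exists>y\<in>tangent_cone T x. dist y (r *\<^sub>R x) < e" by blast
qed

lemma tc_M_shift:
  assumes T: "open_cone T" and x: "x \<in> closure T" "x \<notin> T"
    and z: "z \<in> tangent_cone T x" and q: "q \<in> tangent_cone T x" and l: "l > 0"
    and w: "(1 - l) *\<^sub>R x + l *\<^sub>R z \<in> tangent_cone T x"
  shows "funk (tangent_cone T x) ((1 - l) *\<^sub>R x + l *\<^sub>R z) q = ln l + funk (tangent_cone T x) z q"
proof -
  let ?C = "tangent_cone T x"
  have C: "open_cone ?C" using tc_open_cone[OF T x] .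
  have lz: "l *\<^sub>R z \<in> ?C" using oc_scale[OF C l z] .
  have "funk ?C ((1 - l) *\<^sub>R x + l *\<^sub>R z) q \<le> funk ?C (l *\<^sub>R z) q"
    using F_mono[OF C w lz q] tc_line[OF T x, of "l - 1"] by (simp add: algebra_simps)
  moreover have "funk ?C (l *\<^sub>R z) q \<le> funk ?C ((1 - l) *\<^sub>R x + l *\<^sub>R z) q"
    using F_mono[OF C lz w q] tc_line[OF T x, of "1 - l"] by (simp add: algebra_simps)
  ultimately have "funk ?C ((1 - l) *\<^sub>R x + l *\<^sub>R z) q = funk ?C (l *\<^sub>R z) q" by linarith
  then show ?thesis using F_scale[OF C z q l] by simp
qed


lemma xinv:
  assumes T: "open_cone T" and x: "x \<in> closure T" "x \<notin> T"
    and cv: "funk_converges T b p f" and px: "p \<longlonglongrightarrow> x"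
    and s: "s \<in> T" and c: "c > 0"
  shows "f (s + c *\<^sub>R x) = f s"
proof -
  define l where "l = 1 / (1 + c)"
  have l: "0 < l" "l \<le> 1" using c by (auto simp: l_def)
  define w where "w = l *\<^sub>R s + (1 - l) *\<^sub>R x"
  have w: "w \<in> T" unfolding w_def
    using oc_add_closure[OF T oc_scale[OF T l(1) s] oc_closure_scale0[OF T x(1)]] l by simp
  have fw: "f w = ln l + f s" using lemA[OF T x cv px w s l w_def] .
  have eq: "s + c *\<^sub>R x = (1 + c) *\<^sub>R w"
  proof -
    have "(1 + c) * l = 1" using c by (simp add: l_def)
    moreover have "(1 + c) * (1 - l) = c" using c by (simp add: l_def field_simps)
    ultimately show ?thesis unfolding w_def by (simp add: scaleR_add_right)
  qed
  have "f ((1 + c) *\<^sub>R w) = ln (1 + c) + f w" using FL_scale[OF T cv w] c by simp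
  moreover have "ln (1 + c) + ln l = 0" using c by (simp add: l_def ln_div)
  ultimately show ?thesis using eq fw by simp
qed

lemma tc_ineq:
  assumes T: "open_cone T" and x: "x \<in> closure T" "x \<notin> T"
    and cv: "funk_converges T b q f"
    and inv: "\<And>s c. s \<in> T \<Longrightarrow> c > 0 \<Longrightarrow> f (s + c *\<^sub>R x) = f s"
    and y: "y \<in> T" and s: "s \<in> T"
  shows "f y \<le> funk (tangent_cone T x) y s + f s"
proof (rule ccontr)
  let ?C = "tangent_cone T x"
  have C: "open_cone ?C" using tc_open_cone[OF T x] .
  have sub: "T \<subseteq> ?C" using tc_sub[OF T x(1)] .
  have yC: "y \<in> ?C" and sC: "s \<in> ?C" using y s sub by auto
  define Mt where "Mt = funk_M ?C y s"
  have Mt: "Mt > 0" unfolding Mt_def using funkM_props(1)[OF C yC sC] .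
  assume "\<not> f y \<le> funk ?C y s + f s"
  then have lt: "ln Mt < f y - f s" unfolding Mt_def funk_def by simp
  define l where "l = exp ((ln Mt + (f y - f s)) / 2)"
  have l: "l > 0" unfolding l_def by simp
  have lnl: "ln l = (ln Mt + (f y - f s)) / 2" unfolding l_def by simp
  have "ln Mt < ln l" using lnl lt by simp
  then have Mtl: "Mt < l" using Mt l by simp
  have lnl2: "ln l < f y - f s" using lnl lt by simp
  have "(l - Mt) *\<^sub>R s \<in> ?C" using oc_scale[OF C _ sC] Mtl by simp
  from oc_add_closure[OF C this funkM_props(2)[OF C yC sC]]
  have "(l - Mt) *\<^sub>R s + (Mt *\<^sub>R s - y) \<in> ?C" unfolding Mt_def .
  moreover have "(l - Mt) *\<^sub>R s + (Mt *\<^sub>R s - y) = l *\<^sub>R s - y" by (simp add: algebra_simps)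
  ultimately have "l *\<^sub>R s - y \<in> ?C" by simp
  then obtain c where c: "c > 0" "l *\<^sub>R s - y + c *\<^sub>R x \<in> T" unfolding tc_char[OF T] by auto
  define s' where "s' = s + (c / l) *\<^sub>R x"
  have s': "s' \<in> T" unfolding s'_def
    using oc_add_closure[OF T s oc_closure_scale0[OF T x(1)]] c l by simp
  have eqs: "l *\<^sub>R s' - y = l *\<^sub>R s - y + c *\<^sub>R x" unfolding s'_def using l by (simp add: algebra_simps)
  have "l *\<^sub>R s' - y \<in> T" unfolding eqs using c(2) .
  then have "l *\<^sub>R s' - y \<in> closure T" using closure_subset by blast
  then have "funk_M T y s' \<le> l" using M_le[OF T y s' l] by blast
  then have "funk T y s' \<le> ln l" using funkM_props(1)[OF T y s'] unfolding funk_def by simp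
  moreover have "f y \<le> funk T y s' + f s'" using FL_tri[OF T cv y s'] .
  moreover have "f s' = f s" unfolding s'_def using inv[OF s] c l by simp
  ultimately show False using lnl2 by linarith
qed


lemma AG:
  assumes T: "open_cone T" and C: "open_cone C" and sub: "T \<subseteq> C" and b: "b \<in> T"
    and cv: "funk_converges T b q f" and ag: "almost_geodesic T q"
    and ineq: "\<And>y s. y \<in> T \<Longrightarrow> s \<in> T \<Longrightarrow> f y \<le> funk C y s + f s"
  shows "\<forall>y\<in>T. (\<lambda>m. funk C y (q m) - funk C b (q m)) \<longlonglongrightarrow> f y" and "almost_geodesic C q"
proof -
  have qT: "\<And>n. q n \<in> T" using cv by (simp add: funk_converges_def)
  define F where "F i j = funk T (q i) (q j)" for i j
  define P where "P k = (\<Sum>i=1..k. F (i - 1) i)" for k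
  have PS: "P (Suc k) = P k + F k (Suc k)" for k by (simp add: P_def)
  have P0: "P 0 = 0" by (simp add: P_def)
  have Fself: "F n n = 0" for n unfolding F_def using F_self[OF T qT] .
  have Ftri: "F i k \<le> F i j + F j k" for i j k unfolding F_def using F_tri[OF T qT qT qT] .
  have chain: "F n m \<le> P m - P n" if "n \<le> m" for n m
    using that
  proof (induction m)
    case 0 then show ?case using Fself by simp
  next
    case (Suc m)
    show ?case
    proof (cases "n = Suc m")
      case True then show ?thesis using Fself by simp
    next
      case False
      then have "n \<le> m" using Suc.prems by simp
      then have "F n m \<le> P m - P n" using Suc.IH by simp
      then show ?thesis using Ftri[of n "Suc m" m] PS[of m] by simp
    qed
  qed
  obtain e where e: "e > 0" "\<forall>l\<ge>1. P l \<le> F 0 l + e"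
    using ag unfolding almost_geodesic_def P_def F_def by blast
  have Pall: "P l \<le> F 0 l + e" for l
    using e Fself[of 0] P0 by (cases "l = 0") auto
  define sq where "sq k = P k - F 0 k" for k
  have inc: "incseq sq"
  proof (rule incseq_SucI)
    fix k show "sq k \<le> sq (Suc k)" unfolding sq_def using PS[of k] Ftri[of 0 "Suc k" k] by simp
  qed
  have sqb: "\<forall>i. sq i \<le> e" unfolding sq_def using Pall by (simp add: algebra_simps)
  obtain L where L: "sq \<longlonglongrightarrow> L" "\<forall>i. sq i \<le> L" using incseq_convergent[OF inc sqb] by blast
  have Le: "L \<le> e" using L(1) by (rule tendsto_upperbound) (use sqb in auto)
  have sq0: "sq 0 = 0" unfolding sq_def using P0 Fself by simp
  have AG1: "F n m + F m k \<le> F n k + (L - sq n)" if "n \<le> m" "m \<le> k" for n m k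
  proof -
    have "F n m + F m k \<le> P k - P n" using chain[OF that(1)] chain[OF that(2)] by simp
    moreover have "P k - P n = sq k + F 0 k - sq n - F 0 n" unfolding sq_def by simp
    moreover have "F 0 k \<le> F 0 n + F n k" using Ftri .
    moreover have "sq k \<le> L" using L(2) by simp
    ultimately show ?thesis by linarith
  qed
  have AG2: "f (q m) - f (q n) \<le> (L - sq n) - F n m" if "n \<le> m" for n m
  proof -
    have lim: "(\<lambda>k. funk T (q m) (q k) - funk T (q n) (q k)) \<longlonglongrightarrow> f (q m) - f (q n)"
      using FL_diff[OF cv qT qT] .
    have "eventually (\<lambda>k. funk T (q m) (q k) - funk T (q n) (q k) \<le> (L - sq n) - F n m) sequentially"
      using eventually_ge_at_top[of m]
    proof (rule eventually_mono)
      fix k assume "m \<le> k"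
      then show "funk T (q m) (q k) - funk T (q n) (q k) \<le> (L - sq n) - F n m"
        using AG1[OF that \<open>m \<le> k\<close>] unfolding F_def by simp
    qed
    then show ?thesis using lim by (intro tendsto_upperbound) auto
  qed
  have fb: "f b = 0" using FL_b[OF cv b] .
  define E where "E m = funk T b (q m) + f (q m)" for m
  have E0: "0 \<le> E m" for m unfolding E_def using FL_tri[OF T cv b qT[of m]] fb by simp
  have Elim: "E \<longlonglongrightarrow> 0"
  proof (rule order_tendstoI)
    fix a :: real assume "a < 0"
    then show "eventually (\<lambda>m. a < E m) sequentially" using E0 by (intro always_eventually) (auto intro: less_le_trans)
  next
    fix a :: real assume a: "0 < a"
    have "eventually (\<lambda>n. dist (sq n) L < a / 2) sequentially" using L(1) a unfolding tendsto_iff by (meson half_gt_zero)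
    then obtain N where "\<forall>n\<ge>N. dist (sq n) L < a / 2" unfolding eventually_sequentially by blast
    then obtain n where n: "dist (sq n) L < a / 2" by blast
    then have n': "L - sq n < a / 2" unfolding dist_real_def by linarith
    have lim2: "(\<lambda>m. funk T (q n) (q m) - funk T b (q m)) \<longlonglongrightarrow> f (q n)"
      using cv qT unfolding funk_converges_def by blast
    have ev: "eventually (\<lambda>m. f (q n) - a / 2 < funk T (q n) (q m) - funk T b (q m)) sequentially"
      using order_tendstoD(1)[OF lim2] a by simp
    show "eventually (\<lambda>m. E m < a) sequentially"
      using eventually_conj[OF ev eventually_ge_at_top[of n]]
    proof (rule eventually_mono)
      fix m assume m: "f (q n) - a / 2 < funk T (q n) (q m) - funk T b (q m) \<and> n \<le> m"
      have "f (q m) \<le> f (q n) + (L - sq n) - F n m" using AG2[of n m] m by simp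
      then show "E m < a" unfolding E_def F_def using m n' by simp
    qed
  qed
  have key: "(\<lambda>m. funk C y (q m) + f (q m)) \<longlonglongrightarrow> f y" if y: "y \<in> T" for y
  proof -
    have up: "(\<lambda>m. (funk T y (q m) - funk T b (q m)) + E m) \<longlonglongrightarrow> f y + 0"
      using cv y Elim unfolding funk_converges_def by (intro tendsto_add) auto
    have "eventually (\<lambda>m. f y \<le> funk C y (q m) + f (q m)) sequentially"
      using ineq[OF y qT] by (intro always_eventually) auto
    moreover have "eventually (\<lambda>m. funk C y (q m) + f (q m) \<le> (funk T y (q m) - funk T b (q m)) + E m) sequentially"
      using F_sub[OF T C sub y qT] unfolding E_def by (intro always_eventually) auto
    ultimately show ?thesis using tendsto_sandwich[OF _ _ tendsto_const] up by auto
  qed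
  show "\<forall>y\<in>T. (\<lambda>m. funk C y (q m) - funk C b (q m)) \<longlonglongrightarrow> f y"
  proof
    fix y assume y: "y \<in> T"
    have "(\<lambda>m. (funk C y (q m) + f (q m)) - (funk C b (q m) + f (q m))) \<longlonglongrightarrow> f y - f b"
      using key[OF y] key[OF b] by (rule tendsto_diff)
    then show "(\<lambda>m. funk C y (q m) - funk C b (q m)) \<longlonglongrightarrow> f y" using fb by simp
  qed
  show "almost_geodesic C q"
    unfolding almost_geodesic_def
  proof (intro conjI allI exI[of _ "2 * e"] impI)
    fix n show "q n \<in> C" using qT sub by blast
  next
    show "2 * e > 0" using e by simp
  next
    fix l :: nat assume "1 \<le> l"
    have "(\<Sum>i=1..l. funk C (q (i - 1)) (q i)) \<le> P l"
      unfolding P_def F_def by (intro sum_mono F_sub[OF T C sub qT qT])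
    also have "\<dots> \<le> F 0 l + e" using Pall .
    also have "F 0 l \<le> f (q 0) - f (q l) + L" using AG2[of 0 l] sq0 by simp
    also have "f (q 0) - f (q l) \<le> funk C (q 0) (q l)" using ineq[OF qT qT, of 0 l] by simp
    finally show "(\<Sum>i=1..l. funk C (q (i - 1)) (q i)) \<le> funk C (q 0) (q l) + 2 * e" using Le by simp
  qed
qed

theorem mainTheorem17:
  fixes T :: "'a::euclidean_space set" and b x :: 'a and f :: "'a \<Rightarrow> real"
  assumes "open_cone T" and "b \<in> T"
    and "x \<in> frontier T" and "x \<notin> zero_class T"
    and "in_B T b f" and "in_A T b x f"
  shows "(\<forall>l>0. \<forall>y\<in>T. (1 - l) *\<^sub>R x + l *\<^sub>R y \<in> T \<longrightarrow>
            f ((1 - l) *\<^sub>R x + l *\<^sub>R y) = ln l + f y)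
    \<and> (\<forall>y\<in>tangent_cone T x. \<forall>l1>0. \<forall>l2>0.
            (1 - l1) *\<^sub>R x + l1 *\<^sub>R y \<in> T \<longrightarrow> (1 - l2) *\<^sub>R x + l2 *\<^sub>R y \<in> T \<longrightarrow>
            - ln l1 + f ((1 - l1) *\<^sub>R x + l1 *\<^sub>R y) = - ln l2 + f ((1 - l2) *\<^sub>R x + l2 *\<^sub>R y))
    \<and> (\<forall>y\<in>tangent_cone T x. \<exists>l>0. (1 - l) *\<^sub>R x + l *\<^sub>R y \<in> T)
    \<and> (in_K (tangent_cone T x) b (tangent_ext T x f) \<or> in_B (tangent_cone T x) b (tangent_ext T x f))"
proof -
  have T: "open_cone T" and b: "b \<in> T" using assms by auto
  have opT: "open T" using T by (simp add: open_cone_def)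
  have xcl: "x \<in> closure T" and xnT: "x \<notin> T"
    using assms(3) opT by (auto simp: frontier_def interior_open)
  obtain p where cvp: "funk_converges T b p f" and px: "p \<longlonglongrightarrow> x"
    using assms(6) unfolding in_A_def by blast
  obtain q where ag: "almost_geodesic T q" and cvq: "funk_converges T b q f"
    using assms(5) unfolding in_B_def by blast
  have P1: "\<forall>l>0. \<forall>y\<in>T. (1 - l) *\<^sub>R x + l *\<^sub>R y \<in> T \<longrightarrow>
            f ((1 - l) *\<^sub>R x + l *\<^sub>R y) = ln l + f y"
  proof (intro allI impI ballI)
    fix l :: real and y assume l: "l > 0" and y: "y \<in> T" and w: "(1 - l) *\<^sub>R x + l *\<^sub>R y \<in> T"
    show "f ((1 - l) *\<^sub>R x + l *\<^sub>R y) = ln l + f y"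
    proof (cases "l \<le> 1")
      case True
      show ?thesis using lemA[OF T xcl xnT cvp px w y l True] by (simp add: add.commute)
    next
      case False
      then have l1: "1 / l > 0" "1 / l \<le> 1" using l by auto
      have eq: "y = (1 / l) *\<^sub>R ((1 - l) *\<^sub>R x + l *\<^sub>R y) + (1 - 1 / l) *\<^sub>R x"
      proof -
        have e: "(1 / l) *\<^sub>R ((1 - l) *\<^sub>R x + l *\<^sub>R y) + (1 - 1 / l) *\<^sub>R x
           = ((1 / l) * (1 - l) + (1 - 1 / l)) *\<^sub>R x + ((1 / l) * l) *\<^sub>R y"
          by (simp only: scaleR_add_right scaleR_add_left scaleR_scaleR add_ac)
        have c1: "(1 / l) * (1 - l) + (1 - 1 / l) = 0" using l by (simp add: field_simps)
        have c2: "(1 / l) * l = 1" using l by simp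
        show ?thesis unfolding e c1 c2 by simp
      qed
      have "f y = ln (1 / l) + f ((1 - l) *\<^sub>R x + l *\<^sub>R y)" using lemA[OF T xcl xnT cvp px y w l1 eq] .
      then show ?thesis using l by (simp add: ln_div)
    qed
  qed
  have P2: "\<forall>y\<in>tangent_cone T x. \<forall>l1>0. \<forall>l2>0.
            (1 - l1) *\<^sub>R x + l1 *\<^sub>R y \<in> T \<longrightarrow> (1 - l2) *\<^sub>R x + l2 *\<^sub>R y \<in> T \<longrightarrow>
            - ln l1 + f ((1 - l1) *\<^sub>R x + l1 *\<^sub>R y) = - ln l2 + f ((1 - l2) *\<^sub>R x + l2 *\<^sub>R y)"
  proof (intro ballI allI impI)
    fix y and l1 l2 :: real
    assume l1: "l1 > 0" and l2: "l2 > 0" and z1: "(1 - l1) *\<^sub>R x + l1 *\<^sub>R y \<in> T"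
      and z2: "(1 - l2) *\<^sub>R x + l2 *\<^sub>R y \<in> T"
    have eq: "(1 - l2 / l1) *\<^sub>R x + (l2 / l1) *\<^sub>R ((1 - l1) *\<^sub>R x + l1 *\<^sub>R y) = (1 - l2) *\<^sub>R x + l2 *\<^sub>R y"
    proof -
      have e: "(1 - l2 / l1) *\<^sub>R x + (l2 / l1) *\<^sub>R ((1 - l1) *\<^sub>R x + l1 *\<^sub>R y)
         = ((1 - l2 / l1) + (l2 / l1) * (1 - l1)) *\<^sub>R x + ((l2 / l1) * l1) *\<^sub>R y"
        by (simp only: scaleR_add_right scaleR_add_left scaleR_scaleR add_ac)
      have c1: "(1 - l2 / l1) + (l2 / l1) * (1 - l1) = 1 - l2" using l1 by (simp add: field_simps)
      have c2: "(l2 / l1) * l1 = l2" using l1 by simp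
      show ?thesis unfolding e c1 c2 ..
    qed
    have l21: "l2 / l1 > 0" using l1 l2 by simp
    have z2': "(1 - l2 / l1) *\<^sub>R x + (l2 / l1) *\<^sub>R ((1 - l1) *\<^sub>R x + l1 *\<^sub>R y) \<in> T"
      unfolding eq using z2 .
    from P1[rule_format, OF l21 z1 z2']
    have "f ((1 - l2) *\<^sub>R x + l2 *\<^sub>R y) = ln (l2 / l1) + f ((1 - l1) *\<^sub>R x + l1 *\<^sub>R y)" unfolding eq .
    then show "- ln l1 + f ((1 - l1) *\<^sub>R x + l1 *\<^sub>R y) = - ln l2 + f ((1 - l2) *\<^sub>R x + l2 *\<^sub>R y)"
      using l1 l2 by (simp add: ln_div)
  qed
  have P3: "\<forall>y\<in>tangent_cone T x. \<exists>l>0. (1 - l) *\<^sub>R x + l *\<^sub>R y \<in> T"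
  proof
    fix y assume "y \<in> tangent_cone T x"
    then obtain c where c: "c > 0" "y + c *\<^sub>R x \<in> T" unfolding tc_char[OF T] by auto
    define l where "l = 1 / (1 + c)"
    have l: "l > 0" using c by (simp add: l_def)
    have "(1 - l) *\<^sub>R x + l *\<^sub>R y = l *\<^sub>R (y + c *\<^sub>R x)"
    proof -
      have h: "1 - l = l * c" using c by (simp add: l_def field_simps)
      have e1: "(1 - l) *\<^sub>R x = (l * c) *\<^sub>R x" by (simp only: h)
      show ?thesis unfolding e1 by (simp add: scaleR_add_right algebra_simps)
    qed
    then have "(1 - l) *\<^sub>R x + l *\<^sub>R y \<in> T" using oc_scale[OF T l c(2)] by simp
    then show "\<exists>l>0. (1 - l) *\<^sub>R x + l *\<^sub>R y \<in> T" using l by blast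
  qed
  let ?C = "tangent_cone T x"
  let ?g = "tangent_ext T x f"
  have C: "open_cone ?C" using tc_open_cone[OF T xcl xnT] .
  have sub: "T \<subseteq> ?C" using tc_sub[OF T xcl] .
  have inv: "\<And>s c. s \<in> T \<Longrightarrow> c > 0 \<Longrightarrow> f (s + c *\<^sub>R x) = f s"
    using xinv[OF T xcl xnT cvp px] by blast
  have ineq: "\<And>y s. y \<in> T \<Longrightarrow> s \<in> T \<Longrightarrow> f y \<le> funk ?C y s + f s"
    using tc_ineq[OF T xcl xnT cvq inv] by blast
  note AGr = AG[OF T C sub b cvq ag ineq]
  have qC: "\<And>n. q n \<in> ?C" using cvq sub unfolding funk_converges_def by blast
  have conv: "funk_converges ?C b q ?g"
    unfolding funk_converges_def
  proof (intro conjI allI ballI)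
    fix n show "q n \<in> ?C" using qC .
  next
    fix z assume z: "z \<in> ?C"
    define l where "l = (SOME l. l > 0 \<and> (1 - l) *\<^sub>R x + l *\<^sub>R z \<in> T)"
    have lw: "l > 0 \<and> (1 - l) *\<^sub>R x + l *\<^sub>R z \<in> T"
      unfolding l_def by (rule someI_ex) (use P3 z in blast)
    define w where "w = (1 - l) *\<^sub>R x + l *\<^sub>R z"
    have w: "w \<in> T" using lw w_def by simp
    have g: "?g z = - ln l + f w" unfolding tangent_ext_def Let_def l_def[symmetric] w_def ..
    have lpos: "l > 0" using lw by simp
    have wC: "(1 - l) *\<^sub>R x + l *\<^sub>R z \<in> ?C" using lw sub by blast
    have sh: "funk ?C w (q n) = ln l + funk ?C z (q n)" for n
      unfolding w_def using tc_M_shift[OF T xcl xnT z qC[of n] lpos wC] .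
    have lim1: "(\<lambda>n. funk ?C w (q n) - funk ?C b (q n)) \<longlonglongrightarrow> f w" using bspec[OF AGr(1) w] .
    have lim2: "(\<lambda>n. (funk ?C w (q n) - funk ?C b (q n)) - ln l) \<longlonglongrightarrow> f w - ln l"
      using tendsto_diff[OF lim1 tendsto_const] .
    have eqf: "(\<lambda>n. (funk ?C w (q n) - funk ?C b (q n)) - ln l) = (\<lambda>n. funk ?C z (q n) - funk ?C b (q n))"
    proof
      fix n show "(funk ?C w (q n) - funk ?C b (q n)) - ln l = funk ?C z (q n) - funk ?C b (q n)"
        using sh[of n] by linarith
    qed
    have gz: "f w - ln l = ?g z" using g by linarith
    show "(\<lambda>n. funk ?C z (q n) - funk ?C b (q n)) \<longlonglongrightarrow> ?g z"
      using lim2 unfolding eqf gz .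
  qed
  have P4: "in_K ?C b ?g \<or> in_B ?C b ?g"
  proof (cases "in_K ?C b ?g")
    case True then show ?thesis by simp
  next
    case False
    have "in_B ?C b ?g" unfolding in_B_def funk_horofunction_def using False conv AGr(2) by blast
    then show ?thesis by simp
  qed
  show ?thesis by (intro conjI P1 P2 P3 P4)
qed

end
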